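(* Let $G$ be a locally nilpotent group and $A$ a normal abelian subgroup of $G$ with $G/A$ finite. Suppose that $G$ has a proper contranormal subgroup $C$. Then there exist a subgroup $B\le A$ which is normal in $G$ and a finitely generated subgroup $K$ with $G=AK$ such that $C=BK$ and $A=B[K,A]$. In particular, the factor group $G/B$ has the finite contranormal subgroup $KB/B$.
   Context: A subgroup $H$ of a group $G$ is called contranormal in $G$ if $H^G = G$, where $H^G$ denotes the normal closure of $H$ in $G$ (the smallest normal subgroup of $G$ containing $H$). *)

theory Defs
  imports "HOL-Algebra.Algebra"
begin

definition comm_subgroup :: "('a, 'b) monoid_scheme \<Rightarrow> 'a set \<Rightarrow> 'a set \<Rightarrow> 'a set" where
  "comm_subgroup G H K = generate G
     {inv\<^bsub>G\<^esub> h \<otimes>\<^bsub>G\<^esub> inv\<^bsub>G\<^esub> k \<otimes>\<^bsub>G\<^esub> h \<otimes>\<^bsub>G\<^esub> k | h k. h \<in> H \<and> k \<in> K}"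

text \<open>Lower central series: gamma_1 = G, gamma_(i+1) = [gamma_i, G] (indexed from 0).\<close>
fun lower_central :: "('a, 'b) monoid_scheme \<Rightarrow> nat \<Rightarrow> 'a set" where
  "lower_central G 0 = carrier G"
| "lower_central G (Suc n) = comm_subgroup G (lower_central G n) (carrier G)"

definition nilpotent_group :: "('a, 'b) monoid_scheme \<Rightarrow> bool" where
  "nilpotent_group G \<longleftrightarrow> group G \<and> (\<exists>n. lower_central G n = {\<one>\<^bsub>G\<^esub>})"

definition locally_nilpotent :: "('a, 'b) monoid_scheme \<Rightarrow> bool" where
  "locally_nilpotent G \<longleftrightarrow> group G \<and>
     (\<forall>S. finite S \<and> S \<subseteq> carrier G \<longrightarrow> nilpotent_group (subgroup_generated G S))"

definition finitely_generated_subgroup :: "('a, 'b) monoid_scheme \<Rightarrow> 'a set \<Rightarrow> bool" where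
  "finitely_generated_subgroup G K \<longleftrightarrow> (\<exists>S. finite S \<and> S \<subseteq> carrier G \<and> K = generate G S)"

definition normal_closure :: "('a, 'b) monoid_scheme \<Rightarrow> 'a set \<Rightarrow> 'a set" where
  "normal_closure G H = \<Inter> {N. N \<lhd> G \<and> H \<subseteq> N}"

definition contranormal :: "('a, 'b) monoid_scheme \<Rightarrow> 'a set \<Rightarrow> bool" where
  "contranormal G H \<longleftrightarrow> subgroup H G \<and> normal_closure G H = carrier G"

definition abelian_subgroup :: "('a, 'b) monoid_scheme \<Rightarrow> 'a set \<Rightarrow> bool" where
  "abelian_subgroup G A \<longleftrightarrow> subgroup A G \<and> (\<forall>a\<in>A. \<forall>b\<in>A. a \<otimes>\<^bsub>G\<^esub> b = b \<otimes>\<^bsub>G\<^esub> a)"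

end

theory Submission
  imports Defs
begin


lemma (in group) cancel_l [simp]:
  "g \<in> carrier G \<Longrightarrow> z \<in> carrier G \<Longrightarrow> inv g \<otimes> (g \<otimes> z) = z"
  "g \<in> carrier G \<Longrightarrow> z \<in> carrier G \<Longrightarrow> g \<otimes> (inv g \<otimes> z) = z"
  by (simp_all add: m_assoc[symmetric])

lemma (in group) conj_comm:
  assumes "g \<in> carrier G" "x \<in> carrier G" "y \<in> carrier G"
  shows "g \<otimes> (inv x \<otimes> inv y \<otimes> x \<otimes> y) \<otimes> inv g =
    inv (g \<otimes> x \<otimes> inv g) \<otimes> inv (g \<otimes> y \<otimes> inv g) \<otimes> (g \<otimes> x \<otimes> inv g) \<otimes> (g \<otimes> y \<otimes> inv g)"
  using assms by (simp add: m_assoc inv_mult_group)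

lemma lc_normal:
  assumes "group H" shows "lower_central H i \<lhd> H"
proof (induction i)
  case 0 then show ?case using group.normal_self[OF assms] by simp
next
  case (Suc i)
  interpret H: group H by fact
  interpret N: normal "lower_central H i" H by fact
  show ?case unfolding lower_central.simps comm_subgroup_def
  proof (rule H.normal_generateI)
    show "{inv\<^bsub>H\<^esub> h \<otimes>\<^bsub>H\<^esub> inv\<^bsub>H\<^esub> k \<otimes>\<^bsub>H\<^esub> h \<otimes>\<^bsub>H\<^esub> k |h k. h \<in> lower_central H i \<and> k \<in> carrier H} \<subseteq> carrier H"
      by auto
  next
    fix h g assume h: "h \<in> {inv\<^bsub>H\<^esub> h \<otimes>\<^bsub>H\<^esub> inv\<^bsub>H\<^esub> k \<otimes>\<^bsub>H\<^esub> h \<otimes>\<^bsub>H\<^esub> k |h k. h \<in> lower_central H i \<and> k \<in> carrier H}"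
      and g: "g \<in> carrier H"
    then obtain x y where xy: "h = inv\<^bsub>H\<^esub> x \<otimes>\<^bsub>H\<^esub> inv\<^bsub>H\<^esub> y \<otimes>\<^bsub>H\<^esub> x \<otimes>\<^bsub>H\<^esub> y" "x \<in> lower_central H i" "y \<in> carrier H" by blast
    have "g \<otimes>\<^bsub>H\<^esub> h \<otimes>\<^bsub>H\<^esub> inv\<^bsub>H\<^esub> g =
    inv\<^bsub>H\<^esub> (g \<otimes>\<^bsub>H\<^esub> x \<otimes>\<^bsub>H\<^esub> inv\<^bsub>H\<^esub> g) \<otimes>\<^bsub>H\<^esub> inv\<^bsub>H\<^esub> (g \<otimes>\<^bsub>H\<^esub> y \<otimes>\<^bsub>H\<^esub> inv\<^bsub>H\<^esub> g) \<otimes>\<^bsub>H\<^esub> (g \<otimes>\<^bsub>H\<^esub> x \<otimes>\<^bsub>H\<^esub> inv\<^bsub>H\<^esub> g) \<otimes>\<^bsub>H\<^esub> (g \<otimes>\<^bsub>H\<^esub> y \<otimes>\<^bsub>H\<^esub> inv\<^bsub>H\<^esub> g)"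
      using H.conj_comm xy g by auto
    moreover have "g \<otimes>\<^bsub>H\<^esub> x \<otimes>\<^bsub>H\<^esub> inv\<^bsub>H\<^esub> g \<in> lower_central H i"
      using N.inv_op_closed2 xy g by auto
    moreover have "g \<otimes>\<^bsub>H\<^esub> y \<otimes>\<^bsub>H\<^esub> inv\<^bsub>H\<^esub> g \<in> carrier H" using xy g by auto
    ultimately show "g \<otimes>\<^bsub>H\<^esub> h \<otimes>\<^bsub>H\<^esub> inv\<^bsub>H\<^esub> g \<in> {inv\<^bsub>H\<^esub> h \<otimes>\<^bsub>H\<^esub> inv\<^bsub>H\<^esub> k \<otimes>\<^bsub>H\<^esub> h \<otimes>\<^bsub>H\<^esub> k |h k. h \<in> lower_central H i \<and> k \<in> carrier H}"
      by blast
  qed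
qed



lemma (in group) step1:
  assumes An: "A \<lhd> G"
    and T: "T \<subseteq> carrier G"
    and cover: "\<forall>g\<in>carrier G. \<exists>a\<in>A. \<exists>h\<in>generate G T. g = a \<otimes> h"
    and nil: "nilpotent_group (subgroup_generated G T)"
    and D: "subgroup D G" "A \<subseteq> D"
    and CD: "C \<subseteq> D"
    and contra: "\<And>N. N \<lhd> G \<Longrightarrow> C \<subseteq> N \<Longrightarrow> N = carrier G"
  shows "D = carrier G"
proof -
  interpret AN: normal A G by fact
  interpret DS: subgroup D G by fact
  define H where "H = subgroup_generated G T"
  define \<gamma> where "\<gamma> = lower_central H"
  have cH: "carrier H = generate G T"
    unfolding H_def carrier_subgroup_generated using T by (simp add: Int_absorb1)
  have gH: "group H" unfolding H_def by simp
  have HG: "subgroup (generate G T) G" using generate_is_subgroup[OF T] .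
  have invH: "inv\<^bsub>H\<^esub> x = inv x" if "x \<in> generate G T" for x
    using that cH unfolding H_def by simp
  have mulH: "x \<otimes>\<^bsub>H\<^esub> y = x \<otimes> y" for x y unfolding H_def by simp
  have nrm: "\<gamma> i \<lhd> H" for i unfolding \<gamma>_def using lc_normal[OF gH] .
  have g1: "subgroup (\<gamma> i) G" "\<gamma> i \<subseteq> generate G T" for i
  proof -
    have "subgroup (\<gamma> i) H" using nrm normal_imp_subgroup by blast
    then show "subgroup (\<gamma> i) G" "\<gamma> i \<subseteq> generate G T"
      using subgroup_subgroup_generated_iff cH unfolding H_def by auto
  qed
  have g2: "h \<otimes> x \<otimes> inv h \<in> \<gamma> i" if "h \<in> generate G T" "x \<in> \<gamma> i" for h x i
  proof -
    interpret NN: normal "\<gamma> i" H using nrm .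
    have "h \<otimes>\<^bsub>H\<^esub> x \<otimes>\<^bsub>H\<^esub> inv\<^bsub>H\<^esub> h \<in> \<gamma> i" using NN.inv_op_closed2 that cH by auto
    then show ?thesis using invH mulH that by simp
  qed
  have g3: "inv x \<otimes> inv y \<otimes> x \<otimes> y \<in> \<gamma> (Suc i)" if "x \<in> \<gamma> i" "y \<in> generate G T" for x y i
  proof -
    have "inv\<^bsub>H\<^esub> x \<otimes>\<^bsub>H\<^esub> inv\<^bsub>H\<^esub> y \<otimes>\<^bsub>H\<^esub> x \<otimes>\<^bsub>H\<^esub> y \<in> \<gamma> (Suc i)"
      unfolding \<gamma>_def lower_central.simps comm_subgroup_def
      using that cH unfolding \<gamma>_def by (intro generate.incl) blast
    moreover have "x \<in> generate G T" using g1(2)[of i] that(1) by blast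
    ultimately show ?thesis using invH mulH that by simp
  qed
  have carr: "x \<in> carrier G" if "x \<in> \<gamma> i" for x i using subgroup.mem_carrier[OF g1(1) that] .
  have conj: "\<exists>a\<in>A. \<exists>c'\<in>\<gamma> j. g \<otimes> c \<otimes> inv g = a \<otimes> c'" if "g \<in> carrier G" "c \<in> \<gamma> j" for g c j
  proof -
    obtain a h where ah: "a \<in> A" "h \<in> generate G T" "g = a \<otimes> h" using bspec[OF cover \<open>g \<in> carrier G\<close>] by blast
    define c' where "c' = h \<otimes> c \<otimes> inv h"
    have c': "c' \<in> \<gamma> j" unfolding c'_def using g2[OF ah(2) that(2)] .
    have hc: "h \<in> carrier G" "a \<in> carrier G" "c \<in> carrier G" "c' \<in> carrier G"
      using subgroup.mem_carrier[OF HG ah(2)] ah(1) carr[OF that(2)] carr[OF c'] by auto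
    have "c' \<otimes> inv a \<otimes> inv c' \<in> A" using AN.inv_op_closed2 hc ah by simp
    then have a0: "a \<otimes> (c' \<otimes> inv a \<otimes> inv c') \<in> A" using ah by simp
    have "g \<otimes> c \<otimes> inv g = a \<otimes> (c' \<otimes> inv a \<otimes> inv c') \<otimes> c'"
      using hc unfolding ah(3) c'_def by (simp add: m_assoc inv_mult_group)
    then show ?thesis using a0 c' by blast
  qed
  define Q where "Q j = {x. \<exists>d\<in>D. \<exists>c\<in>\<gamma> j. x = d \<otimes> c}" for j
  have Qc: "Q j \<subseteq> carrier G" for j unfolding Q_def using carr by auto
  have Qm: "x \<otimes> y \<in> Q j" if xy: "x \<in> Q j" "y \<in> Q j" for x y j
  proof -
    obtain d1 c1 where 1: "d1 \<in> D" "c1 \<in> \<gamma> j" "x = d1 \<otimes> c1" using xy(1) unfolding Q_def by blast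
    obtain d2 c2 where 2: "d2 \<in> D" "c2 \<in> \<gamma> j" "y = d2 \<otimes> c2" using xy(2) unfolding Q_def by blast
    have cc: "d1 \<in> carrier G" "d2 \<in> carrier G" "c1 \<in> carrier G" "c2 \<in> carrier G"
      using 1 2 carr by auto
    obtain a c' where ac: "a \<in> A" "c' \<in> \<gamma> j" "inv d2 \<otimes> c1 \<otimes> inv (inv d2) = a \<otimes> c'"
      using conj[of "inv d2" c1 j] 1 2 cc by auto
    have cc2: "a \<in> carrier G" "c' \<in> carrier G" using ac carr by auto
    have "d1 \<otimes> d2 \<otimes> a \<otimes> (c' \<otimes> c2) = d1 \<otimes> d2 \<otimes> (a \<otimes> c') \<otimes> c2"
      using cc cc2 by (simp add: m_assoc)
    also have "\<dots> = d1 \<otimes> d2 \<otimes> (inv d2 \<otimes> c1 \<otimes> d2) \<otimes> c2" using ac cc by simp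
    also have "\<dots> = x \<otimes> y" using cc 1 2 by (simp add: m_assoc)
    finally have "x \<otimes> y = d1 \<otimes> d2 \<otimes> a \<otimes> (c' \<otimes> c2)" by simp
    moreover have "d1 \<otimes> d2 \<otimes> a \<in> D" using 1 2 ac D by auto
    moreover have "c' \<otimes> c2 \<in> \<gamma> j" using subgroup.m_closed[OF g1(1) ac(2) 2(2)] .
    ultimately show ?thesis unfolding Q_def by blast
  qed
  have Qi: "inv x \<in> Q j" if xq: "x \<in> Q j" for x j
  proof -
    obtain d c where 1: "d \<in> D" "c \<in> \<gamma> j" "x = d \<otimes> c" using xq unfolding Q_def by blast
    have cc: "d \<in> carrier G" "c \<in> carrier G" using 1 carr by auto
    have ic: "inv c \<in> \<gamma> j" using subgroup.m_inv_closed[OF g1(1) 1(2)] .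
    obtain a c' where ac: "a \<in> A" "c' \<in> \<gamma> j" "d \<otimes> inv c \<otimes> inv d = a \<otimes> c'"
      using conj[of d "inv c" j] ic cc by auto
    have cc2: "a \<in> carrier G" "c' \<in> carrier G" using ac carr by auto
    have "inv d \<otimes> a \<otimes> c' = inv d \<otimes> (a \<otimes> c')" using cc cc2 by (simp add: m_assoc)
    also have "\<dots> = inv d \<otimes> (d \<otimes> inv c \<otimes> inv d)" using ac by simp
    also have "\<dots> = inv x" using cc 1 by (simp add: m_assoc inv_mult_group)
    finally have "inv x = inv d \<otimes> a \<otimes> c'" by simp
    moreover have "inv d \<otimes> a \<in> D" using 1 ac D by auto
    ultimately show ?thesis unfolding Q_def using ac by blast
  qed
  have Q1: "\<one> \<in> Q j" for j
  proof -
    have "\<one> = \<one> \<otimes> \<one>" "\<one> \<in> \<gamma> j" using subgroup.one_closed[OF g1(1)] by auto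
    then show ?thesis unfolding Q_def using DS.one_closed by blast
  qed
  have Qs: "subgroup (Q j) G" for j
    by (rule subgroupI) (use Qc Qm Qi Q1[of j] in auto)
  have DQ: "D \<subseteq> Q j" for j
  proof
    fix d assume "d \<in> D"
    then have "d = d \<otimes> \<one>" "\<one> \<in> \<gamma> j" using subgroup.one_closed[OF g1(1)] by auto
    then show "d \<in> Q j" unfolding Q_def using \<open>d \<in> D\<close> by blast
  qed
  have gQ: "\<gamma> j \<subseteq> Q j" for j
  proof
    fix c assume "c \<in> \<gamma> j"
    then have "c = \<one> \<otimes> c" using carr by auto
    then show "c \<in> Q j" unfolding Q_def using \<open>c \<in> \<gamma> j\<close> DS.one_closed by blast
  qed
  have N2: "x \<otimes> c \<otimes> inv x \<in> Q j" if "x \<in> carrier G" "c \<in> \<gamma> j" for x c j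
    using conj[OF that] D unfolding Q_def by blast
  have P: "\<forall>g\<in>carrier G. \<exists>d\<in>D. \<exists>c\<in>\<gamma> i. g = d \<otimes> c" for i
  proof (induction i)
    case 0
    have g0: "\<gamma> 0 = generate G T" unfolding \<gamma>_def using cH by simp
    show ?case
    proof
      fix g assume "g \<in> carrier G"
      then obtain a h where "a \<in> A" "h \<in> generate G T" "g = a \<otimes> h" using bspec[OF cover] by blast
      then show "\<exists>d\<in>D. \<exists>c\<in>\<gamma> 0. g = d \<otimes> c" using D(2) g0 by blast
    qed
  next
    case (Suc i)
    have N0: "c \<otimes> d \<otimes> inv c \<in> Q (Suc i)" if c: "c \<in> \<gamma> i" and d: "d \<in> D" for c d
    proof -
      have dG: "d \<in> carrier G" using d by auto
      obtain a h where ah: "a \<in> A" "h \<in> generate G T" "d = a \<otimes> h" using bspec[OF cover dG] by blast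
      have cc: "h \<in> carrier G" "a \<in> carrier G" "c \<in> carrier G"
        using subgroup.mem_carrier[OF HG ah(2)] ah(1) carr[OF c] by auto
      define a1 where "a1 = inv h \<otimes> (inv a \<otimes> (c \<otimes> a \<otimes> inv c)) \<otimes> h"
      have "c \<otimes> a \<otimes> inv c \<in> A" using AN.inv_op_closed2 cc ah by simp
      then have "inv a \<otimes> (c \<otimes> a \<otimes> inv c) \<in> A" using ah by simp
      then have a1: "a1 \<in> A" unfolding a1_def using AN.inv_op_closed1 cc by simp
      have ic: "inv c \<in> \<gamma> i" using subgroup.m_inv_closed[OF g1(1) c] .
      have "inv (inv c) \<otimes> inv h \<otimes> inv c \<otimes> h \<in> \<gamma> (Suc i)" using g3[OF ic ah(2)] .
      then have c4: "inv (c \<otimes> inv h \<otimes> inv c \<otimes> h) \<in> \<gamma> (Suc i)"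
        using g1 subgroup.m_inv_closed cc by fastforce
      have "c \<otimes> d \<otimes> inv c = d \<otimes> a1 \<otimes> inv (c \<otimes> inv h \<otimes> inv c \<otimes> h)"
        unfolding a1_def ah(3) using cc by (simp add: m_assoc inv_mult_group)
      moreover have "d \<otimes> a1 \<in> D" using d a1 D by auto
      ultimately show ?thesis unfolding Q_def using c4 by blast
    qed
    have N1: "x \<otimes> d \<otimes> inv x \<in> Q (Suc i)" if x: "x \<in> carrier G" and d: "d \<in> D" for x d
    proof -
      obtain d' c where dc: "d' \<in> D" "c \<in> \<gamma> i" "x = d' \<otimes> c" using bspec[OF Suc x] by blast
      have cc: "d' \<in> carrier G" "c \<in> carrier G" "d \<in> carrier G" using dc carr d by auto
      obtain d3 c3 where e: "d3 \<in> D" "c3 \<in> \<gamma> (Suc i)" "c \<otimes> d \<otimes> inv c = d3 \<otimes> c3"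
        using N0[OF dc(2) d] unfolding Q_def by blast
      have cc3: "d3 \<in> carrier G" "c3 \<in> carrier G" using e carr by auto
      have "x \<otimes> d \<otimes> inv x = d' \<otimes> (c \<otimes> d \<otimes> inv c) \<otimes> inv d'"
        unfolding dc(3) using cc by (simp add: m_assoc inv_mult_group)
      also have "\<dots> = (d' \<otimes> d3 \<otimes> inv d') \<otimes> (d' \<otimes> c3 \<otimes> inv d')"
        unfolding e(3) using cc cc3 by (simp add: m_assoc)
      finally have eq: "x \<otimes> d \<otimes> inv x = (d' \<otimes> d3 \<otimes> inv d') \<otimes> (d' \<otimes> c3 \<otimes> inv d')" .
      have "d' \<otimes> d3 \<otimes> inv d' \<in> Q (Suc i)" using DQ dc e D by auto
      moreover have "d' \<otimes> c3 \<otimes> inv d' \<in> Q (Suc i)" using N2[OF cc(1) e(2)] .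
      ultimately show ?thesis using eq Qm by simp
    qed
    have "Q (Suc i) \<lhd> G" unfolding normal_inv_iff
    proof (intro conjI Qs ballI)
      fix x q assume x: "x \<in> carrier G" and q: "q \<in> Q (Suc i)"
      obtain d c where dc: "d \<in> D" "c \<in> \<gamma> (Suc i)" "q = d \<otimes> c" using q unfolding Q_def by blast
      have cc: "d \<in> carrier G" "c \<in> carrier G" using dc carr by auto
      have "x \<otimes> q \<otimes> inv x = (x \<otimes> d \<otimes> inv x) \<otimes> (x \<otimes> c \<otimes> inv x)"
        unfolding dc(3) using cc x by (simp add: m_assoc)
      then show "x \<otimes> q \<otimes> inv x \<in> Q (Suc i)" using N1[OF x dc(1)] N2[OF x dc(2)] Qm by simp
    qed
    moreover have "C \<subseteq> Q (Suc i)" using CD DQ[of "Suc i"] by blast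
    ultimately have "Q (Suc i) = carrier G" by (rule contra)
    then show ?case unfolding Q_def by blast
  qed
  obtain n where n: "\<gamma> n = {\<one>\<^bsub>H\<^esub>}" using nil unfolding nilpotent_group_def \<gamma>_def H_def by blast
  have "\<one>\<^bsub>H\<^esub> = \<one>" unfolding H_def by simp
  show ?thesis
  proof
    show "carrier G \<subseteq> D"
    proof
      fix g assume "g \<in> carrier G"
      then obtain d c where "d \<in> D" "c \<in> \<gamma> n" "g = d \<otimes> c" using P by blast
      then show "g \<in> D" using n \<open>\<one>\<^bsub>H\<^esub> = \<one>\<close> by auto
    qed
  qed (use DS.subset in auto)
qed



lemma (in group) mem_smult: shows "x \<in> U <#> V \<longleftrightarrow> (\<exists>a\<in>U. \<exists>b\<in>V. x = a \<otimes> b)"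
  by (auto simp: set_mult_def)

lemma (in group) mem_rcos: shows "x \<in> U #> g \<longleftrightarrow> (\<exists>a\<in>U. x = a \<otimes> g)"
  by (auto simp: r_coset_def)

theorem propositionB:
  fixes G (structure) and A C :: "'a set"
  assumes "locally_nilpotent G"
    and "A \<lhd> G" and "abelian_subgroup G A"
    and "finite (carrier (G Mod A))"
    and "contranormal G C" and "C \<noteq> carrier G"
  shows "\<exists>B K. B \<subseteq> A \<and> B \<lhd> G \<and> subgroup K G \<and> finitely_generated_subgroup G K
           \<and> carrier G = A <#> K \<and> C = B <#> K \<and> A = B <#> comm_subgroup G K A
           \<and> finite ((\<lambda>k. B #> k) ` K)
           \<and> contranormal (G Mod B) ((\<lambda>k. B #> k) ` K)"
proof -
  interpret group G using assms(1) unfolding locally_nilpotent_def by blast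
  interpret AN: normal A G by fact
  have Cs: "subgroup C G" using assms(5) unfolding contranormal_def by blast
  interpret CS: subgroup C G by fact
  have contra: "N = carrier G" if "N \<lhd> G" "C \<subseteq> N" for N
  proof -
    have "normal_closure G C \<subseteq> N" unfolding normal_closure_def using that by blast
    moreover have "N \<subseteq> carrier G" using subgroup.subset[OF normal_imp_subgroup[OF that(1)]] .
    ultimately show ?thesis using assms(5) unfolding contranormal_def by blast
  qed
  have Acomm: "a \<otimes> b = b \<otimes> a" if "a \<in> A" "b \<in> A" for a b
    using assms(3) that unfolding abelian_subgroup_def by blast
  define R where "R = carrier (G Mod A)"
  have R: "R = (\<lambda>x. A #> x) ` carrier G" unfolding R_def carrier_FactGroup ..
  have finR: "finite R" using assms(4) R_def by simp
  define T where "T = (\<lambda>Xc. SOME g. g \<in> carrier G \<and> Xc = A #> g) ` R"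
  have T: "T \<subseteq> carrier G" "finite T"
  proof -
    show "finite T" unfolding T_def using finR by simp
    show "T \<subseteq> carrier G" unfolding T_def R
      by (auto intro: someI2_ex)
  qed
  have cover: "\<forall>g\<in>carrier G. \<exists>a\<in>A. \<exists>h\<in>generate G T. g = a \<otimes> h"
  proof
    fix g assume g: "g \<in> carrier G"
    define t where "t = (SOME t. t \<in> carrier G \<and> A #> g = A #> t)"
    have "\<exists>t. t \<in> carrier G \<and> A #> g = A #> t" using g by blast
    then have t: "t \<in> carrier G" "A #> g = A #> t" unfolding t_def by (metis (mono_tags, lifting) someI_ex)+
    have "A #> g \<in> R" unfolding R using g by (rule imageI)
    then have "t \<in> T" unfolding T_def t_def by (rule imageI)
    have "g \<in> A #> t" using rcos_self[OF g AN.subgroup_axioms] t by simp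
    then obtain a where "a \<in> A" "g = a \<otimes> t" by (auto simp: mem_rcos)
    then show "\<exists>a\<in>A. \<exists>h\<in>generate G T. g = a \<otimes> h" using generate.incl[OF \<open>t \<in> T\<close>] by blast
  qed
  have nil: "nilpotent_group (subgroup_generated G T)"
    using assms(1) T unfolding locally_nilpotent_def by blast
  interpret SI: second_isomorphism_grp A G C by unfold_locales
  have "A <#> C = carrier G"
    by (rule step1[OF assms(2) T(1) cover nil SI.normal_set_mult_subgroup
          SI.H_contained_in_set_mult SI.S_contained_in_set_mult contra])
  then have AC: "\<exists>a\<in>A. \<exists>c\<in>C. g = a \<otimes> c" if "g \<in> carrier G" for g
  proof -
    have "g \<in> A <#> C" using that \<open>A <#> C = carrier G\<close> by simp
    then show ?thesis by (simp only: mem_smult)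
  qed
  have rep: "\<exists>c. c \<in> C \<and> Xc = A #> c" if XR: "Xc \<in> R" for Xc
  proof -
    obtain g where g: "g \<in> carrier G" "Xc = A #> g" using XR unfolding R by blast
    obtain a c where ac: "a \<in> A" "c \<in> C" "g = a \<otimes> c" using AC g by blast
    have "A #> g = (A #> a) #> c" unfolding ac(3) using coset_mult_assoc[OF AN.subset, of a c] ac by auto
    also have "\<dots> = A #> c" using AN.rcos_const[OF is_group ac(1)] by simp
    finally show ?thesis using g ac by blast
  qed
  define S where "S = (\<lambda>Xc. SOME c. c \<in> C \<and> Xc = A #> c) ` R"
  have S: "S \<subseteq> C" "finite S"
  proof -
    show "finite S" unfolding S_def using finR by simp
    show "S \<subseteq> C" unfolding S_def using rep by (auto intro: someI2_ex)
  qed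
  define K where "K = generate G S"
  have SG: "S \<subseteq> carrier G" using S CS.subset by blast
  have Ks: "subgroup K G" unfolding K_def using generate_is_subgroup[OF SG] .
  interpret KS: subgroup K G by fact
  have KC: "K \<subseteq> C" unfolding K_def using generate_subgroup_incl[OF S(1) Cs] .
  have fg: "finitely_generated_subgroup G K"
    unfolding finitely_generated_subgroup_def K_def using S SG by blast
  have AK: "\<exists>a\<in>A. \<exists>k\<in>K. g = a \<otimes> k" if g: "g \<in> carrier G" for g
  proof -
    define c where "c = (SOME c. c \<in> C \<and> A #> g = A #> c)"
    have Xc: "A #> g \<in> R" unfolding R using g by (rule imageI)
    then have c: "c \<in> C" "A #> g = A #> c" unfolding c_def using rep[OF Xc] by (metis (mono_tags, lifting) someI_ex)+
    have "c \<in> S" unfolding S_def c_def using Xc by (rule imageI)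
    then have "c \<in> K" unfolding K_def by (rule generate.incl)
    have "g \<in> A #> c" using rcos_self[OF g AN.subgroup_axioms] c by simp
    then obtain a where "a \<in> A" "g = a \<otimes> c" by (auto simp: mem_rcos)
    then show ?thesis using \<open>c \<in> K\<close> by blast
  qed
  have GAK: "carrier G = A <#> K"
  proof
    show "carrier G \<subseteq> A <#> K"
    proof
      fix g assume "g \<in> carrier G"
      then show "g \<in> A <#> K" unfolding mem_smult by (rule AK)
    qed
    show "A <#> K \<subseteq> carrier G"
    proof
      fix x assume "x \<in> A <#> K"
      then obtain b k where bk: "b \<in> A" "k \<in> K" "x = b \<otimes> k" by (auto simp: mem_smult)
      then show "x \<in> carrier G" by simp
    qed
  qed
  define B where "B = C \<inter> A"
  have BA: "B \<subseteq> A" unfolding B_def by blast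
  have Bs: "subgroup B G" unfolding B_def
  proof (rule subgroupI)
    have "\<one> \<in> C \<inter> A" using CS.one_closed AN.one_closed by blast
    then show "C \<inter> A \<noteq> {}" by blast
  qed (use CS.subset in auto)
  interpret BS: subgroup B G by fact
  have Bn: "B \<lhd> G" unfolding normal_inv_iff
  proof (intro conjI Bs ballI)
    fix x b assume x: "x \<in> carrier G" and b: "b \<in> B"
    obtain a k where ak: "a \<in> A" "k \<in> K" "x = a \<otimes> k" using AK x by blast
    have cc: "a \<in> carrier G" "k \<in> carrier G" "b \<in> carrier G" using ak b BS.subset by auto
    have kb: "k \<otimes> b \<otimes> inv k \<in> A" using AN.inv_op_closed2 cc b BA by auto
    have kbc: "k \<otimes> b \<otimes> inv k \<in> C" using KC ak b B_def by auto
    have "x \<otimes> b \<otimes> inv x = a \<otimes> (k \<otimes> b \<otimes> inv k) \<otimes> inv a"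
      unfolding ak(3) using cc by (simp add: m_assoc inv_mult_group)
    also have "\<dots> = (k \<otimes> b \<otimes> inv k) \<otimes> a \<otimes> inv a" using Acomm[OF ak(1) kb] by simp
    also have "\<dots> = k \<otimes> b \<otimes> inv k" using cc by (simp add: m_assoc)
    finally show "x \<otimes> b \<otimes> inv x \<in> B" using kb kbc B_def by simp
  qed
  interpret BN: normal B G by fact
  have CBK: "C = B <#> K"
  proof
    show "C \<subseteq> B <#> K"
    proof
      fix c assume c: "c \<in> C"
      obtain a k where ak: "a \<in> A" "k \<in> K" "c = a \<otimes> k" using AK c CS.subset by blast
      have cc: "a \<in> carrier G" "k \<in> carrier G" using ak by auto
      have "a = c \<otimes> inv k" using ak cc by (simp add: m_assoc)
      moreover have "k \<in> C" using ak(2) KC by blast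
      ultimately have "a \<in> C" using CS.m_closed[OF c CS.m_inv_closed] by metis
      then have "a \<in> B" unfolding B_def using ak by blast
      then show "c \<in> B <#> K" unfolding mem_smult using ak by blast
    qed
    show "B <#> K \<subseteq> C"
    proof
      fix x assume "x \<in> B <#> K"
      then obtain b k where bk: "b \<in> B" "k \<in> K" "x = b \<otimes> k" by (auto simp: mem_smult)
      have "b \<in> C" "k \<in> C" using bk KC unfolding B_def by auto
      then show "x \<in> C" using bk(3) CS.m_closed by simp
    qed
  qed

  define Gs where "Gs = {inv h \<otimes> inv k \<otimes> h \<otimes> k | h k. h \<in> K \<and> k \<in> A}"
  define Kc where "Kc = comm_subgroup G K A"
  have Kc_def': "Kc = generate G Gs" unfolding Kc_def comm_subgroup_def Gs_def ..
  have GsI: "inv h \<otimes> inv k \<otimes> h \<otimes> k \<in> Kc" if "h \<in> K" "k \<in> A" for h k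
    unfolding Kc_def' Gs_def using that by (intro generate.incl) blast
  have GsA: "Gs \<subseteq> A"
  proof
    fix x assume "x \<in> Gs"
    then obtain h k where hk: "h \<in> K" "k \<in> A" "x = inv h \<otimes> inv k \<otimes> h \<otimes> k" unfolding Gs_def by blast
    have cc: "h \<in> carrier G" "k \<in> carrier G" using hk by auto
    have "inv h \<otimes> inv k \<otimes> h \<in> A" using AN.inv_op_closed1[of h "inv k"] cc hk by auto
    then show "x \<in> A" using hk by auto
  qed
  have GsG: "Gs \<subseteq> carrier G" using GsA AN.subset by blast
  have KcA: "Kc \<subseteq> A" unfolding Kc_def' using generate_subgroup_incl[OF GsA AN.subgroup_axioms] .
  have Kcs: "subgroup Kc G" unfolding Kc_def' using generate_is_subgroup[OF GsG] .
  interpret KcS: subgroup Kc G by fact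
  have Kcn: "k \<otimes> x \<otimes> inv k \<in> Kc" if k: "k \<in> K" and x: "x \<in> Kc" for k x
  proof -
    have kc: "k \<in> carrier G" using k by auto
    define W where "W = {x \<in> carrier G. k \<otimes> x \<otimes> inv k \<in> Kc}"
    have Ws: "subgroup W G" unfolding W_def
    proof (rule subgroupI)
      show "{x \<in> carrier G. k \<otimes> x \<otimes> inv k \<in> Kc} \<noteq> {}" using kc by auto
    next
      fix a assume "a \<in> {x \<in> carrier G. k \<otimes> x \<otimes> inv k \<in> Kc}"
      then have a: "a \<in> carrier G" "k \<otimes> a \<otimes> inv k \<in> Kc" by auto
      have "k \<otimes> inv a \<otimes> inv k = inv (k \<otimes> a \<otimes> inv k)" using a kc by (simp add: m_assoc inv_mult_group)
      then show "inv a \<in> {x \<in> carrier G. k \<otimes> x \<otimes> inv k \<in> Kc}" using a by auto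
    next
      fix a b assume "a \<in> {x \<in> carrier G. k \<otimes> x \<otimes> inv k \<in> Kc}" "b \<in> {x \<in> carrier G. k \<otimes> x \<otimes> inv k \<in> Kc}"
      then have a: "a \<in> carrier G" "k \<otimes> a \<otimes> inv k \<in> Kc" "b \<in> carrier G" "k \<otimes> b \<otimes> inv k \<in> Kc" by auto
      have "k \<otimes> (a \<otimes> b) \<otimes> inv k = (k \<otimes> a \<otimes> inv k) \<otimes> (k \<otimes> b \<otimes> inv k)" using a kc by (simp add: m_assoc)
      then show "a \<otimes> b \<in> {x \<in> carrier G. k \<otimes> x \<otimes> inv k \<in> Kc}" using a by auto
    qed auto
    have "Gs \<subseteq> W"
    proof
      fix g assume "g \<in> Gs"
      then obtain h a where ha: "h \<in> K" "a \<in> A" "g = inv h \<otimes> inv a \<otimes> h \<otimes> a" unfolding Gs_def by blast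
      have cc: "h \<in> carrier G" "a \<in> carrier G" using ha by auto
      have e: "k \<otimes> g \<otimes> inv k = (inv (h \<otimes> inv k) \<otimes> inv a \<otimes> (h \<otimes> inv k) \<otimes> a) \<otimes> inv (inv (inv k) \<otimes> inv a \<otimes> inv k \<otimes> a)"
        unfolding ha(3) using cc kc by (simp add: m_assoc inv_mult_group)
      have "h \<otimes> inv k \<in> K" "inv k \<in> K" using ha k by auto
      then have "inv (h \<otimes> inv k) \<otimes> inv a \<otimes> (h \<otimes> inv k) \<otimes> a \<in> Kc" "inv (inv k) \<otimes> inv a \<otimes> inv k \<otimes> a \<in> Kc"
        using GsI ha by blast+
      then have "k \<otimes> g \<otimes> inv k \<in> Kc" using e by simp
      then show "g \<in> W" unfolding W_def using ha cc by auto
    qed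
    then have "Kc \<subseteq> W" unfolding Kc_def' using generate_subgroup_incl[OF _ Ws] by blast
    then show ?thesis using x W_def by blast
  qed
  have CK: "inv c \<otimes> x \<otimes> c \<in> Kc" if c: "c \<in> C" and x: "x \<in> Kc" for c x
  proof -
    obtain b k where bk: "b \<in> B" "k \<in> K" "c = b \<otimes> k" using c unfolding CBK mem_smult by blast
    have cc: "b \<in> carrier G" "k \<in> carrier G" "x \<in> carrier G" using bk x by auto
    have "inv b \<otimes> x = x \<otimes> inv b" using Acomm[of "inv b" x] bk BA KcA x by auto
    then have "inv c \<otimes> x \<otimes> c = inv k \<otimes> x \<otimes> inv (inv k)"
      unfolding bk(3) using cc by (simp add: m_assoc inv_mult_group)
    then show ?thesis using Kcn[of "inv k" x] bk x by auto
  qed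
  define M where "M = {g. \<exists>c\<in>C. \<exists>x\<in>Kc. g = c \<otimes> x}"
  have Mm: "p \<otimes> q \<in> M" if pq: "p \<in> M" "q \<in> M" for p q
  proof -
    obtain c1 x1 where 1: "c1 \<in> C" "x1 \<in> Kc" "p = c1 \<otimes> x1" using pq(1) unfolding M_def by blast
    obtain c2 x2 where 2: "c2 \<in> C" "x2 \<in> Kc" "q = c2 \<otimes> x2" using pq(2) unfolding M_def by blast
    have cc: "c1 \<in> carrier G" "c2 \<in> carrier G" "x1 \<in> carrier G" "x2 \<in> carrier G" using 1 2 by auto
    have "p \<otimes> q = (c1 \<otimes> c2) \<otimes> ((inv c2 \<otimes> x1 \<otimes> c2) \<otimes> x2)"
      unfolding 1 2 using cc by (simp add: m_assoc)
    moreover have "(inv c2 \<otimes> x1 \<otimes> c2) \<otimes> x2 \<in> Kc" using CK 1 2 by auto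
    ultimately show ?thesis unfolding M_def using 1 2 by blast
  qed
  have Ms: "subgroup M G"
  proof (rule subgroupI)
    show "M \<subseteq> carrier G" unfolding M_def by auto
    have "\<one> = \<one> \<otimes> \<one>" by simp
    then have "\<one> \<in> M" unfolding M_def using CS.one_closed KcS.one_closed by blast
    then show "M \<noteq> {}" by blast
  next
    fix p assume "p \<in> M"
    then obtain c x where 1: "c \<in> C" "x \<in> Kc" "p = c \<otimes> x" unfolding M_def by blast
    have cc: "c \<in> carrier G" "x \<in> carrier G" using 1 by auto
    have "inv p = inv c \<otimes> (inv (inv c) \<otimes> inv x \<otimes> inv c)"
      unfolding 1 using cc by (simp add: m_assoc inv_mult_group)
    moreover have "inv (inv c) \<otimes> inv x \<otimes> inv c \<in> Kc" using CK[of "inv c" "inv x"] 1 by auto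
    ultimately show "inv p \<in> M" unfolding M_def using 1 by blast
  qed (rule Mm)
  have KcM: "Kc \<subseteq> M"
  proof
    fix x assume x: "x \<in> Kc"
    then have "x = \<one> \<otimes> x" by simp
    then show "x \<in> M" unfolding M_def using CS.one_closed x by blast
  qed
  have CM: "C \<subseteq> M"
  proof
    fix x assume x: "x \<in> C"
    then have "x = x \<otimes> \<one>" by simp
    then show "x \<in> M" unfolding M_def using KcS.one_closed x by blast
  qed
  have Mn: "M \<lhd> G" unfolding normal_inv_iff
  proof (intro conjI Ms ballI)
    fix g p assume g: "g \<in> carrier G" and p: "p \<in> M"
    obtain c y where 1: "c \<in> C" "y \<in> Kc" "p = c \<otimes> y" using p unfolding M_def by blast
    obtain a k where ak: "a \<in> A" "k \<in> K" "g = a \<otimes> k" using AK g by blast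
    have cc: "c \<in> carrier G" "y \<in> carrier G" "a \<in> carrier G" "k \<in> carrier G" using 1 ak by auto
    have e1: "g \<otimes> p \<otimes> inv g = (g \<otimes> c \<otimes> inv g) \<otimes> (g \<otimes> y \<otimes> inv g)"
      unfolding 1 using cc g by (simp add: m_assoc)
    have ky: "k \<otimes> y \<otimes> inv k \<in> Kc" using Kcn ak 1 by blast
    have "g \<otimes> y \<otimes> inv g = a \<otimes> (k \<otimes> y \<otimes> inv k) \<otimes> inv a"
      unfolding ak(3) using cc by (simp add: m_assoc inv_mult_group)
    also have "\<dots> = (k \<otimes> y \<otimes> inv k) \<otimes> a \<otimes> inv a" using Acomm[OF ak(1), of "k \<otimes> y \<otimes> inv k"] ky KcA by auto
    also have "\<dots> = k \<otimes> y \<otimes> inv k" using cc by (simp add: m_assoc)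
    finally have y2: "g \<otimes> y \<otimes> inv g \<in> M" using ky KcM by auto
    define c' where "c' = k \<otimes> c \<otimes> inv k"
    have c': "c' \<in> C" unfolding c'_def using 1 ak KC by auto
    obtain b k2 where bk: "b \<in> B" "k2 \<in> K" "c' = b \<otimes> k2" using c' unfolding CBK mem_smult by blast
    have cc2: "b \<in> carrier G" "k2 \<in> carrier G" using bk by auto
    have ba: "inv b \<otimes> a = a \<otimes> inv b" using Acomm[of "inv b" a] bk BA ak by auto
    have "g \<otimes> c \<otimes> inv g = a \<otimes> c' \<otimes> inv a"
      unfolding ak(3) c'_def using cc by (simp add: m_assoc inv_mult_group)
    also have "\<dots> = c' \<otimes> (inv c' \<otimes> a \<otimes> c' \<otimes> inv a)"
      using cc c' by (simp add: m_assoc)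
    also have "inv c' \<otimes> a \<otimes> c' \<otimes> inv a = inv k2 \<otimes> inv (inv a) \<otimes> k2 \<otimes> inv a"
    proof -
      have "inv c' \<otimes> a \<otimes> c' \<otimes> inv a = inv k2 \<otimes> (inv b \<otimes> a) \<otimes> b \<otimes> k2 \<otimes> inv a"
        unfolding bk(3) using cc cc2 by (simp add: m_assoc inv_mult_group)
      also have "\<dots> = inv k2 \<otimes> a \<otimes> k2 \<otimes> inv a" unfolding ba using cc cc2 by (simp add: m_assoc)
      finally show ?thesis using cc by simp
    qed
    finally have "g \<otimes> c \<otimes> inv g = c' \<otimes> (inv k2 \<otimes> inv (inv a) \<otimes> k2 \<otimes> inv a)" .
    moreover have "inv k2 \<otimes> inv (inv a) \<otimes> k2 \<otimes> inv a \<in> Kc" by (rule GsI[OF bk(2) AN.m_inv_closed[OF ak(1)]])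
    ultimately have "g \<otimes> c \<otimes> inv g \<in> M" unfolding M_def using c' by blast
    then show "g \<otimes> p \<otimes> inv g \<in> M" using e1 y2 Mm by simp
  qed
  have MG: "M = carrier G" using contra[OF Mn CM] .
  have ABK: "A = B <#> Kc"
  proof
    show "A \<subseteq> B <#> Kc"
    proof
      fix a assume a: "a \<in> A"
      then obtain c x where 1: "c \<in> C" "x \<in> Kc" "a = c \<otimes> x" using MG M_def AN.subset by blast
      have cc: "c \<in> carrier G" "x \<in> carrier G" using 1 by auto
      have "c = a \<otimes> inv x" using 1 cc by (simp add: m_assoc)
      moreover have "x \<in> A" using 1(2) KcA by blast
      ultimately have "c \<in> A" using AN.m_closed[OF a AN.m_inv_closed] by metis
      then have "c \<in> B" unfolding B_def using 1 by blast
      then show "a \<in> B <#> Kc" unfolding mem_smult using 1 by blast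
    qed
    show "B <#> Kc \<subseteq> A"
    proof
      fix x assume "x \<in> B <#> Kc"
      then obtain b k where bk: "b \<in> B" "k \<in> Kc" "x = b \<otimes> k" by (auto simp: mem_smult)
      have "b \<in> A" "k \<in> A" using bk BA KcA by auto
      then show "x \<in> A" using bk(3) AN.m_closed by simp
    qed
  qed
  define F where "F = (\<lambda>k. B #> k) ` K"
  have finF: "finite F"
  proof -
    have "F \<subseteq> (\<lambda>Xc. B #> (SOME k. k \<in> K \<and> Xc = A #> k)) ` R"
    proof
      fix Y assume "Y \<in> F"
      then obtain k where k: "k \<in> K" "Y = B #> k" unfolding F_def by blast
      have kc: "k \<in> carrier G" using k by auto
      have Xc: "A #> k \<in> R" unfolding R using kc by (rule imageI)
      define k' where "k' = (SOME k'. k' \<in> K \<and> A #> k = A #> k')"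
      have "\<exists>k'. k' \<in> K \<and> A #> k = A #> k'" using k by blast
      then have k': "k' \<in> K" "A #> k = A #> k'" unfolding k'_def by (metis (mono_tags, lifting) someI_ex)+
      have kc': "k' \<in> carrier G" using k' by auto
      have "k' \<in> A #> k" using rcos_self[OF kc' AN.subgroup_axioms] k' by simp
      then obtain a where a: "a \<in> A" "k' = a \<otimes> k" by (auto simp: mem_rcos)
      have ac: "a \<in> carrier G" using a by auto
      have "a = k' \<otimes> inv k" using a ac kc by (simp add: m_assoc)
      then have "a \<in> K" using k k' by auto
      then have aB: "a \<in> B" using a KC B_def by auto
      have "B #> k' = (B #> a) #> k" unfolding a(2) using coset_mult_assoc[OF BS.subset ac kc] by simp
      also have "\<dots> = B #> k" using BS.rcos_const[OF is_group aB] by simp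
      finally have "Y = B #> k'" using k by simp
      moreover have "B #> k' \<in> (\<lambda>Xc. B #> (SOME k. k \<in> K \<and> Xc = A #> k)) ` R"
        unfolding k'_def using Xc by (rule imageI)
      ultimately show "Y \<in> (\<lambda>Xc. B #> (SOME k. k \<in> K \<and> Xc = A #> k)) ` R" by simp
    qed
    then show ?thesis using finR finite_subset by blast
  qed
  interpret hh: group_hom G "G Mod B" "(#>) B"
    by (simp add: group_hom_def group_hom_axioms_def is_group BN.factorgroup_is_group BN.r_coset_hom_Mod)
  have Fs: "subgroup F (G Mod B)" unfolding F_def using hh.subgroup_img_is_subgroup[OF Ks] by simp
  have cF: "contranormal (G Mod B) F"
    unfolding contranormal_def normal_closure_def
  proof (intro conjI Fs)
    show "\<Inter> {N. N \<lhd> G Mod B \<and> F \<subseteq> N} = carrier (G Mod B)"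
    proof
      have "carrier (G Mod B) \<lhd> G Mod B" using group.normal_self[OF BN.factorgroup_is_group] .
      moreover have "F \<subseteq> carrier (G Mod B)" using Fs subgroup.subset by blast
      ultimately show "\<Inter> {N. N \<lhd> G Mod B \<and> F \<subseteq> N} \<subseteq> carrier (G Mod B)" by blast
    next
      show "carrier (G Mod B) \<subseteq> \<Inter> {N. N \<lhd> G Mod B \<and> F \<subseteq> N}"
      proof (rule Inter_greatest)
        fix N assume "N \<in> {N. N \<lhd> G Mod B \<and> F \<subseteq> N}"
        then have N: "N \<lhd> G Mod B" "F \<subseteq> N" by auto
        interpret NN: normal N "G Mod B" by fact
        define P where "P = {g \<in> carrier G. B #> g \<in> N}"
        have Ps: "subgroup P G" unfolding P_def
        proof (rule subgroupI)
          have "B #> \<one> \<in> N" using hh.hom_one NN.one_closed by simp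
          then show "{g \<in> carrier G. B #> g \<in> N} \<noteq> {}" by blast
        next
          fix a assume "a \<in> {g \<in> carrier G. B #> g \<in> N}"
          then show "inv a \<in> {g \<in> carrier G. B #> g \<in> N}"
            using hh.hom_inv NN.m_inv_closed by auto
        next
          fix a b assume "a \<in> {g \<in> carrier G. B #> g \<in> N}" "b \<in> {g \<in> carrier G. B #> g \<in> N}"
          then show "a \<otimes> b \<in> {g \<in> carrier G. B #> g \<in> N}"
            using hh.hom_mult NN.m_closed by auto
        qed auto
        have Pn: "P \<lhd> G" unfolding normal_inv_iff
        proof (intro conjI Ps ballI)
          fix x p assume x: "x \<in> carrier G" and p: "p \<in> P"
          have pc: "p \<in> carrier G" "B #> p \<in> N" using p P_def by auto
          have "B #> (x \<otimes> p \<otimes> inv x) = (B #> x) \<otimes>\<^bsub>G Mod B\<^esub> (B #> p) \<otimes>\<^bsub>G Mod B\<^esub> inv\<^bsub>G Mod B\<^esub> (B #> x)"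
            using x pc hh.hom_mult hh.hom_inv by simp
          moreover have "(B #> x) \<otimes>\<^bsub>G Mod B\<^esub> (B #> p) \<otimes>\<^bsub>G Mod B\<^esub> inv\<^bsub>G Mod B\<^esub> (B #> x) \<in> N"
            using NN.inv_op_closed2 pc x hh.hom_closed by blast
          ultimately show "x \<otimes> p \<otimes> inv x \<in> P" unfolding P_def using x pc by auto
        qed
        have "C \<subseteq> P"
        proof
          fix c assume c: "c \<in> C"
          obtain b k where bk: "b \<in> B" "k \<in> K" "c = b \<otimes> k" using c unfolding CBK mem_smult by blast
          have cc: "b \<in> carrier G" "k \<in> carrier G" using bk by auto
          have "B #> c = (B #> b) #> k" unfolding bk(3) using coset_mult_assoc[OF BS.subset cc] by simp
          also have "\<dots> = B #> k" using BS.rcos_const[OF is_group bk(1)] by simp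
          finally have "B #> c \<in> F" unfolding F_def using bk by blast
          then show "c \<in> P" unfolding P_def using N c by auto
        qed
        then have "P = carrier G" using contra Pn by blast
        then show "carrier (G Mod B) \<subseteq> N" unfolding carrier_FactGroup P_def by blast
      qed
    qed
  qed
  show ?thesis
    apply (rule exI[of _ B], rule exI[of _ K])
    using BA Bn Ks fg GAK CBK ABK finF cF unfolding Kc_def F_def by blast
qed

end
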